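(* There exists a mapping $\varrho$ on finite timed HT-traces $\mathbf{M}$ (preserving the length $\lambda\ge0$) such that for every metric formula $\varphi$ and every $k\in[0,\lambda)$: $\mathbf{M},k\models\varphi$ iff $\varrho(\mathbf{M}),\lambda-1-k\models\sigma(\varphi)$.
   Context: Metric formulas over $\mathcal{A}$: $\varphi ::= p \mid \bot \mid \varphi_1\otimes\varphi_2 \mid \bullet_I\varphi \mid \varphi_1\,\mathsf{S}_I\,\varphi_2 \mid \varphi_1\,\mathsf{T}_I\,\varphi_2 \mid \bigcirc_I\varphi \mid \varphi_1\,\mathsf{U}_I\,\varphi_2 \mid \varphi_1\,\mathsf{R}_I\,\varphi_2$, $\otimes\in\{\to,\wedge,\vee\}$, $I=[m,n)$, $m\in\mathbb{N}$, $n\in\mathbb{N}\cup\{\omega\}$. Derived: $\neg\varphi=\varphi\to\bot$, $\top=\neg\bot$, $\blacksquare_I\varphi=\bot\,\mathsf{T}_I\,\varphi$, eventually before $=\top\,\mathsf{S}_I\,\varphi$, $\widehat{\bullet}_I\varphi=\bullet_I\varphi\vee\neg\bullet_I\top$, $\Box_I\varphi=\bot\,\mathsf{R}_I\,\varphi$, $\Diamond_I\varphi=\top\,\mathsf{U}_I\,\varphi$, $\widehat{\bigcirc}_I\varphi=\bigcirc_I\varphi\vee\neg\bigcirc_I\top$. Timed HT-trace $\mathbf{M}=(\langle\mathbf{H},\mathbf{T}\rangle,\tau)$ of length $\lambda$: $H_i\subseteq T_i\subseteq\mathcal{A}$, $\tau:[0,\lambda)\to\mathbb{N}$, $\tau(0)=0$,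 $\tau(i)\le\tau(i+1)$. Satisfaction at $k$: $\bot$ never; $p$ iff $p\in H_k$; $\wedge,\vee$ usual; $\varphi\to\psi$ iff for both $\mathbf{M}'=\mathbf{M}$ and $\mathbf{M}'=(\langle\mathbf{T},\mathbf{T}\rangle,\tau)$, $\mathbf{M}',k\not\models\varphi$ or $\mathbf{M}',k\models\psi$; $\bullet_I\varphi$: $k>0$, $\varphi$ at $k-1$, $\tau(k)-\tau(k-1)\in I$; $\varphi\,\mathsf{S}_I\,\psi$: some $j\in[0,k]$ with $\tau(k)-\tau(j)\in I$, $\psi$ at $j$, $\varphi$ at all $i\in(j,k]$; $\varphi\,\mathsf{T}_I\,\psi$: for all such $j$, $\psi$ at $j$ or $\varphi$ at some $i\in(j,k]$; $\bigcirc_I\varphi$: $k+1<\lambda$, $\varphi$ at $k+1$, $\tau(k+1)-\tau(k)\in I$; $\varphi\,\mathsf{U}_I\,\psi$: some $j\in[k,\lambda)$ with $\tau(j)-\tau(k)\in I$, $\psi$ at $j$, $\varphi$ at all $i\in[k,j)$; $\varphi\,\mathsf{R}_I\,\psi$: for all such $j$, $\psi$ at $j$ or $\varphi$ at some $i\in[k,j)$. $\sigma(\varphi)$ replaces each connective by its swapped-time version: $\mathsf{U}_I/\mathsf{S}_I$, $\mathsf{R}_I/\mathsf{T}_I$, $\bigcirc_I/\bullet_I$, $\widehat{\bigcirc}_I/\widehat{\bullet}_I$, $\Box_I/\blacksquare_I$, $\Diamond_I$ / eventually before ($\top\,\mathsf{S}_I\,\cdot$). *)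

theory Defs
  imports Main "HOL-Library.Extended_Nat"
begin

text \<open>Intervals I = [m,n) with m natural and n natural or omega (encoded as enat infinity).\<close>
type_synonym intv = "nat \<times> enat"

definition in_intv :: "nat \<Rightarrow> intv \<Rightarrow> bool" where
  "in_intv d I \<longleftrightarrow> fst I \<le> d \<and> enat d < snd I"

datatype 'a mform =
    Atom 'a
  | Bot
  | Impl "'a mform" "'a mform"
  | Conj "'a mform" "'a mform"
  | Disj "'a mform" "'a mform"
  | Prev intv "'a mform"
  | Since intv "'a mform" "'a mform"
  | Trigger intv "'a mform" "'a mform"
  | Next intv "'a mform"
  | Until intv "'a mform" "'a mform"
  | Release intv "'a mform" "'a mform"

text \<open>Finite timed HT-trace of length len; only the positions i < len are meaningful.\<close>
record 'a tht =
  len :: nat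
  hs  :: "nat \<Rightarrow> 'a set"
  ts  :: "nat \<Rightarrow> 'a set"
  tau :: "nat \<Rightarrow> nat"

definition wf_tht :: "'a tht \<Rightarrow> bool" where
  "wf_tht M \<longleftrightarrow>
     (\<forall>i < len M. hs M i \<subseteq> ts M i) \<and>
     (0 < len M \<longrightarrow> tau M 0 = 0) \<and>
     (\<forall>i. i + 1 < len M \<longrightarrow> tau M i \<le> tau M (i + 1))"

definition total :: "'a tht \<Rightarrow> 'a tht" where
  "total M = M\<lparr>hs := ts M\<rparr>"

primrec sat :: "'a tht \<Rightarrow> nat \<Rightarrow> 'a mform \<Rightarrow> bool" where
  "sat M k (Atom p) \<longleftrightarrow> p \<in> hs M k"
| "sat M k Bot \<longleftrightarrow> False"
| "sat M k (Impl \<phi> \<psi>) \<longleftrightarrow>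
     (\<not> sat M k \<phi> \<or> sat M k \<psi>) \<and> (\<not> sat (total M) k \<phi> \<or> sat (total M) k \<psi>)"
| "sat M k (Conj \<phi> \<psi>) \<longleftrightarrow> sat M k \<phi> \<and> sat M k \<psi>"
| "sat M k (Disj \<phi> \<psi>) \<longleftrightarrow> sat M k \<phi> \<or> sat M k \<psi>"
| "sat M k (Prev I \<phi>) \<longleftrightarrow>
     0 < k \<and> sat M (k - 1) \<phi> \<and> in_intv (tau M k - tau M (k - 1)) I"
| "sat M k (Since I \<phi> \<psi>) \<longleftrightarrow>
     (\<exists>j \<le> k. in_intv (tau M k - tau M j) I \<and> sat M j \<psi> \<and>
        (\<forall>i. j < i \<and> i \<le> k \<longrightarrow> sat M i \<phi>))"
| "sat M k (Trigger I \<phi> \<psi>) \<longleftrightarrow>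
     (\<forall>j \<le> k. in_intv (tau M k - tau M j) I \<longrightarrow>
        sat M j \<psi> \<or> (\<exists>i. j < i \<and> i \<le> k \<and> sat M i \<phi>))"
| "sat M k (Next I \<phi>) \<longleftrightarrow>
     k + 1 < len M \<and> sat M (k + 1) \<phi> \<and> in_intv (tau M (k + 1) - tau M k) I"
| "sat M k (Until I \<phi> \<psi>) \<longleftrightarrow>
     (\<exists>j. k \<le> j \<and> j < len M \<and> in_intv (tau M j - tau M k) I \<and> sat M j \<psi> \<and>
        (\<forall>i. k \<le> i \<and> i < j \<longrightarrow> sat M i \<phi>))"
| "sat M k (Release I \<phi> \<psi>) \<longleftrightarrow>
     (\<forall>j. k \<le> j \<and> j < len M \<and> in_intv (tau M j - tau M k) I \<longrightarrow>
        sat M j \<psi> \<or> (\<exists>i. k \<le> i \<and> i < j \<and> sat M i \<phi>))"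

primrec swap :: "'a mform \<Rightarrow> 'a mform" where
  "swap (Atom p) = Atom p"
| "swap Bot = Bot"
| "swap (Impl \<phi> \<psi>) = Impl (swap \<phi>) (swap \<psi>)"
| "swap (Conj \<phi> \<psi>) = Conj (swap \<phi>) (swap \<psi>)"
| "swap (Disj \<phi> \<psi>) = Disj (swap \<phi>) (swap \<psi>)"
| "swap (Prev I \<phi>) = Next I (swap \<phi>)"
| "swap (Since I \<phi> \<psi>) = Until I (swap \<phi>) (swap \<psi>)"
| "swap (Trigger I \<phi> \<psi>) = Release I (swap \<phi>) (swap \<psi>)"
| "swap (Next I \<phi>) = Prev I (swap \<phi>)"
| "swap (Until I \<phi> \<psi>) = Since I (swap \<phi>) (swap \<psi>)"
| "swap (Release I \<phi> \<psi>) = Trigger I (swap \<phi>) (swap \<psi>)"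

end

theory Submission
  imports Defs
begin

definition rv :: "'a tht \<Rightarrow> 'a tht" where
  "rv M = M\<lparr>hs := \<lambda>i. hs M (len M - 1 - i), ts := \<lambda>i. ts M (len M - 1 - i),
            tau := \<lambda>i. tau M (len M - 1) - tau M (len M - 1 - i)\<rparr>"

lemma tau_mono: "wf_tht M \<Longrightarrow> i \<le> j \<Longrightarrow> j < len M \<Longrightarrow> tau M i \<le> tau M j"
proof (induction j)
  case 0 then show ?case by simp
next
  case (Suc j)
  show ?case
  proof (cases "i = Suc j")
    case False
    then have "i \<le> j" using Suc by simp
    then have "tau M i \<le> tau M j" using Suc by simp
    moreover have "tau M j \<le> tau M (j+1)" using Suc(2,4) unfolding wf_tht_def by simp
    ultimately show ?thesis by simp
  qed simp
qed

lemma wf_total: "wf_tht M \<Longrightarrow> wf_tht (total M)"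
  by (simp add: wf_tht_def total_def)

lemma rv_total: "total (rv M) = rv (total M)"
  by (simp add: rv_def total_def)

lemma rv_simps[simp]: "len (rv M) = len M" "hs (rv M) i = hs M (len M - 1 - i)"
  "ts (rv M) i = ts M (len M - 1 - i)"
  "tau (rv M) i = tau M (len M - 1) - tau M (len M - 1 - i)"
  by (simp_all add: rv_def)

lemma len_total[simp]: "len (total M) = len M" "tau (total M) = tau M"
  by (simp_all add: total_def)

lemma wf_rv: "wf_tht M \<Longrightarrow> wf_tht (rv M)"
proof -
  assume w: "wf_tht M"
  have "tau M (len M - 1 - (i+1)) \<le> tau M (len M - 1 - i)" if "i + 1 < len M" for i
    using tau_mono[OF w, of "len M - 1 - (i+1)" "len M - 1 - i"] that by simp
  then show ?thesis using w unfolding wf_tht_def by (auto intro: diff_le_mono2)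
qed

lemma tdiff: "wf_tht M \<Longrightarrow> j \<le> k \<Longrightarrow> k < len M \<Longrightarrow>
  (tau M (len M - 1) - tau M (len M - 1 - (len M - 1 - j))) - (tau M (len M - 1) - tau M (len M - 1 - (len M - 1 - k)))
   = tau M k - tau M j"
proof -
  assume a: "wf_tht M" "j \<le> k" "k < len M"
  have e1: "len M - 1 - (len M - 1 - j) = j" "len M - 1 - (len M - 1 - k) = k" using a by auto
  have "tau M j \<le> tau M k" "tau M k \<le> tau M (len M - 1)" using a tau_mono[OF a(1)] by auto
  then show ?thesis unfolding e1 by simp
qed

lemma rv_tdiff: "wf_tht M \<Longrightarrow> i \<le> i' \<Longrightarrow> i' < len M \<Longrightarrow>
  tau (rv M) i' - tau (rv M) i = tau M (len M - 1 - i) - tau M (len M - 1 - i')"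
proof -
  assume a: "wf_tht M" "i \<le> i'" "i' < len M"
  have "tau M (len M - 1 - i') \<le> tau M (len M - 1 - i)" "tau M (len M - 1 - i) \<le> tau M (len M - 1)"
    using a tau_mono[OF a(1)] by auto
  then show ?thesis by simp
qed

lemma rv_tdiff2: "wf_tht M \<Longrightarrow> a \<le> b \<Longrightarrow> b < len M \<Longrightarrow>
  tau (rv M) (len M - 1 - a) - tau (rv M) (len M - 1 - b) = tau M b - tau M a"
  using tdiff[of M a b] by simp

lemma main: "wf_tht M \<Longrightarrow> k < len M \<Longrightarrow> sat M k \<phi> = sat (rv M) (len M - 1 - k) (swap \<phi>)"
proof (induction \<phi> arbitrary: M k)
  case (Impl \<phi>1 \<phi>2)
  have w: "wf_tht (total M)" using Impl wf_total by blast
  show ?case using Impl.IH[OF Impl.prems] Impl.IH[OF w] Impl.prems(2)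
    by (simp add: rv_total)
next
  case (Conj a b) then show ?case by simp
next
  case (Disj a b) then show ?case by simp
next
  case (Prev I \<phi>)
  note w = Prev.prems(1) and kl = Prev.prems(2)
  show ?case
  proof (cases "k = 0")
    case True then show ?thesis using kl by simp
  next
    case False
    have e: "len M - 1 - k + 1 = len M - 1 - (k - 1)" using False kl by simp
    have t: "tau (rv M) (len M - 1 - (k - 1)) - tau (rv M) (len M - 1 - k) = tau M k - tau M (k - 1)"
      using rv_tdiff2[OF w, of "k - 1" k] kl by simp
    have l: "len M - 1 - k + 1 < len M" using False kl by simp
    have "sat (rv M) (len M - 1 - k) (swap (Prev I \<phi>)) \<longleftrightarrow>
      sat (rv M) (len M - 1 - (k - 1)) (swap \<phi>) \<and> in_intv (tau (rv M) (len M - 1 - (k - 1)) - tau (rv M) (len M - 1 - k)) I"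
      using l by (simp only: sat.simps swap.simps rv_simps(1) e) simp
    also have "\<dots> \<longleftrightarrow> sat M k (Prev I \<phi>)"
      using Prev.IH[OF w, of "k - 1"] kl False t by simp
    finally show ?thesis by simp
  qed
next
  case (Next I \<phi>)
  note w = Next.prems(1) and kl = Next.prems(2)
  show ?case
  proof (cases "k + 1 < len M")
    case False then show ?thesis using kl by auto
  next
    case True
    have e: "len M - 1 - k - 1 = len M - 1 - (k + 1)" using True by simp
    have t: "tau (rv M) (len M - 1 - k) - tau (rv M) (len M - 1 - (k + 1)) = tau M (k+1) - tau M k"
      using rv_tdiff2[OF w, of k "k + 1"] True by simp
    have p: "0 < len M - 1 - k" using True by simp
    have "sat (rv M) (len M - 1 - k) (swap (Next I \<phi>)) \<longleftrightarrow>
      sat (rv M) (len M - 1 - (k + 1)) (swap \<phi>) \<and> in_intv (tau (rv M) (len M - 1 - k) - tau (rv M) (len M - 1 - (k + 1))) I"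
      using p by (simp only: sat.simps swap.simps e) simp
    also have "\<dots> \<longleftrightarrow> sat M k (Next I \<phi>)"
      using Next.IH[OF w, of "k + 1"] True t by simp
    finally show ?thesis by simp
  qed
next
  case (Since I \<phi>1 \<phi>2)
  note w = Since.prems(1) and kl = Since.prems(2)
  have IH1: "\<And>i. i < len M \<Longrightarrow> sat M i \<phi>1 = sat (rv M) (len M - 1 - i) (swap \<phi>1)"
    using Since.IH(1)[OF w] .
  have IH2: "\<And>i. i < len M \<Longrightarrow> sat M i \<phi>2 = sat (rv M) (len M - 1 - i) (swap \<phi>2)"
    using Since.IH(2)[OF w] .
  show ?case
  proof
    assume "sat M k (Since I \<phi>1 \<phi>2)"
    then obtain j where j: "j \<le> k" "in_intv (tau M k - tau M j) I" "sat M j \<phi>2"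
      "\<forall>i. j < i \<and> i \<le> k \<longrightarrow> sat M i \<phi>1" by auto
    show "sat (rv M) (len M - 1 - k) (swap (Since I \<phi>1 \<phi>2))"
      unfolding swap.simps sat.simps rv_simps(1)
    proof (intro exI[of _ "len M - 1 - j"] conjI allI impI)
      show "len M - 1 - k \<le> len M - 1 - j" using j by simp
      show "len M - 1 - j < len M" using kl by simp
      show "in_intv (tau (rv M) (len M - 1 - j) - tau (rv M) (len M - 1 - k)) I"
        using rv_tdiff2[OF w j(1) kl] j(2) by simp
      show "sat (rv M) (len M - 1 - j) (swap \<phi>2)" using IH2[of j] j kl by simp
      fix i' assume a: "len M - 1 - k \<le> i' \<and> i' < len M - 1 - j"
      then have b: "j < len M - 1 - i'" "len M - 1 - i' \<le> k" "len M - 1 - (len M - 1 - i') = i'"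
        using kl by auto
      then show "sat (rv M) i' (swap \<phi>1)" using IH1[of "len M - 1 - i'"] j(4) kl by auto
    qed
  next
    assume "sat (rv M) (len M - 1 - k) (swap (Since I \<phi>1 \<phi>2))"
    then obtain j' where j': "len M - 1 - k \<le> j'" "j' < len M"
      "in_intv (tau (rv M) j' - tau (rv M) (len M - 1 - k)) I" "sat (rv M) j' (swap \<phi>2)"
      "\<forall>i. len M - 1 - k \<le> i \<and> i < j' \<longrightarrow> sat (rv M) i (swap \<phi>1)" by auto
    define j where "j = len M - 1 - j'"
    have jj: "len M - 1 - j = j'" "j \<le> k" using j' kl j_def by auto
    show "sat M k (Since I \<phi>1 \<phi>2)" unfolding sat.simps
    proof (intro exI[of _ j] conjI allI impI)
      show "j \<le> k" by fact
      show "in_intv (tau M k - tau M j) I" using rv_tdiff2[OF w jj(2) kl] jj(1) j'(3) by simp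
      show "sat M j \<phi>2" using IH2[of j] jj j'(4) kl by simp
      fix i assume "j < i \<and> i \<le> k"
      then have "len M - 1 - k \<le> len M - 1 - i" "len M - 1 - i < j'" "i < len M" using jj kl by auto
      then show "sat M i \<phi>1" using IH1[of i] j'(5) kl by auto
    qed
  qed
next
  case (Until I \<phi>1 \<phi>2)
  note w = Until.prems(1) and kl = Until.prems(2)
  have IH1: "\<And>i. i < len M \<Longrightarrow> sat M i \<phi>1 = sat (rv M) (len M - 1 - i) (swap \<phi>1)"
    using Until.IH(1)[OF w] .
  have IH2: "\<And>i. i < len M \<Longrightarrow> sat M i \<phi>2 = sat (rv M) (len M - 1 - i) (swap \<phi>2)"
    using Until.IH(2)[OF w] .
  show ?case
  proof
    assume "sat M k (Until I \<phi>1 \<phi>2)"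
    then obtain j where j: "k \<le> j" "j < len M" "in_intv (tau M j - tau M k) I" "sat M j \<phi>2"
      "\<forall>i. k \<le> i \<and> i < j \<longrightarrow> sat M i \<phi>1" by auto
    show "sat (rv M) (len M - 1 - k) (swap (Until I \<phi>1 \<phi>2))"
      unfolding swap.simps sat.simps rv_simps(1)
    proof (intro exI[of _ "len M - 1 - j"] conjI allI impI)
      show "len M - 1 - j \<le> len M - 1 - k" using j by simp
      show "in_intv (tau (rv M) (len M - 1 - k) - tau (rv M) (len M - 1 - j)) I"
        using rv_tdiff2[OF w j(1) j(2)] j(3) by simp
      show "sat (rv M) (len M - 1 - j) (swap \<phi>2)" using IH2[of j] j by simp
      fix i' assume a: "len M - 1 - j < i' \<and> i' \<le> len M - 1 - k"
      then have b: "k \<le> len M - 1 - i'" "len M - 1 - i' < j" "len M - 1 - (len M - 1 - i') = i'"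
        using kl j by auto
      then show "sat (rv M) i' (swap \<phi>1)" using IH1[of "len M - 1 - i'"] j(5) j(2) by auto
    qed
  next
    assume "sat (rv M) (len M - 1 - k) (swap (Until I \<phi>1 \<phi>2))"
    then obtain j' where j': "j' \<le> len M - 1 - k"
      "in_intv (tau (rv M) (len M - 1 - k) - tau (rv M) j') I" "sat (rv M) j' (swap \<phi>2)"
      "\<forall>i. j' < i \<and> i \<le> len M - 1 - k \<longrightarrow> sat (rv M) i (swap \<phi>1)" by auto
    define j where "j = len M - 1 - j'"
    have jj: "len M - 1 - j = j'" "k \<le> j" "j < len M" using j' kl j_def by auto
    show "sat M k (Until I \<phi>1 \<phi>2)" unfolding sat.simps
    proof (intro exI[of _ j] conjI allI impI)
      show "k \<le> j" "j < len M" using jj by auto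
      show "in_intv (tau M j - tau M k) I" using rv_tdiff2[OF w jj(2) jj(3)] jj(1) j'(2) by simp
      show "sat M j \<phi>2" using IH2[of j] jj j'(3) by simp
      fix i assume "k \<le> i \<and> i < j"
      then have "j' < len M - 1 - i" "len M - 1 - i \<le> len M - 1 - k" "i < len M" using jj kl by auto
      then show "sat M i \<phi>1" using IH1[of i] j'(4) by auto
    qed
  qed
next
  case (Trigger I \<phi>1 \<phi>2)
  note w = Trigger.prems(1) and kl = Trigger.prems(2)
  have IH1: "\<And>i. i < len M \<Longrightarrow> sat M i \<phi>1 = sat (rv M) (len M - 1 - i) (swap \<phi>1)"
    using Trigger.IH(1)[OF w] .
  have IH2: "\<And>i. i < len M \<Longrightarrow> sat M i \<phi>2 = sat (rv M) (len M - 1 - i) (swap \<phi>2)"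
    using Trigger.IH(2)[OF w] .
  show ?case
  proof
    assume H: "sat M k (Trigger I \<phi>1 \<phi>2)"
    show "sat (rv M) (len M - 1 - k) (swap (Trigger I \<phi>1 \<phi>2))"
      unfolding swap.simps sat.simps rv_simps(1)
    proof (intro allI impI)
      fix j' assume a: "len M - 1 - k \<le> j' \<and> j' < len M \<and>
        in_intv (tau (rv M) j' - tau (rv M) (len M - 1 - k)) I"
      define j where "j = len M - 1 - j'"
      have jj: "len M - 1 - j = j'" "j \<le> k" using a kl j_def by auto
      have "in_intv (tau M k - tau M j) I" using rv_tdiff2[OF w jj(2) kl] jj(1) a by simp
      then have "sat M j \<phi>2 \<or> (\<exists>i. j < i \<and> i \<le> k \<and> sat M i \<phi>1)" using H jj by auto
      then show "sat (rv M) j' (swap \<phi>2) \<or> (\<exists>i. len M - 1 - k \<le> i \<and> i < j' \<and> sat (rv M) i (swap \<phi>1))"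
      proof
        assume "sat M j \<phi>2" then show ?thesis using IH2[of j] jj kl by auto
      next
        assume "\<exists>i. j < i \<and> i \<le> k \<and> sat M i \<phi>1"
        then obtain i where i: "j < i" "i \<le> k" "sat M i \<phi>1" by auto
        have "len M - 1 - k \<le> len M - 1 - i" "len M - 1 - i < j'" using i jj kl by auto
        then show ?thesis using IH1[of i] i kl by auto
      qed
    qed
  next
    assume H: "sat (rv M) (len M - 1 - k) (swap (Trigger I \<phi>1 \<phi>2))"
    show "sat M k (Trigger I \<phi>1 \<phi>2)" unfolding sat.simps
    proof (intro allI impI)
      fix j assume a0: "j \<le> k" and a1: "in_intv (tau M k - tau M j) I"
      note a = a0 a1
      have "in_intv (tau (rv M) (len M - 1 - j) - tau (rv M) (len M - 1 - k)) I"
        using rv_tdiff2[OF w _ kl, of j] a by simp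
      moreover have "len M - 1 - k \<le> len M - 1 - j" "len M - 1 - j < len M" using a kl by auto
      ultimately have "sat (rv M) (len M - 1 - j) (swap \<phi>2) \<or>
        (\<exists>i. len M - 1 - k \<le> i \<and> i < len M - 1 - j \<and> sat (rv M) i (swap \<phi>1))"
        using H by auto
      then show "sat M j \<phi>2 \<or> (\<exists>i. j < i \<and> i \<le> k \<and> sat M i \<phi>1)"
      proof
        assume "sat (rv M) (len M - 1 - j) (swap \<phi>2)" then show ?thesis using IH2[of j] a kl by auto
      next
        assume "\<exists>i. len M - 1 - k \<le> i \<and> i < len M - 1 - j \<and> sat (rv M) i (swap \<phi>1)"
        then obtain i' where i: "len M - 1 - k \<le> i'" "i' < len M - 1 - j" "sat (rv M) i' (swap \<phi>1)" by auto
        have "j < len M - 1 - i'" "len M - 1 - i' \<le> k" "len M - 1 - (len M - 1 - i') = i'" using i a kl by auto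
        then show ?thesis using IH1[of "len M - 1 - i'"] i kl by auto
      qed
    qed
  qed
next
  case (Release I \<phi>1 \<phi>2)
  note w = Release.prems(1) and kl = Release.prems(2)
  have IH1: "\<And>i. i < len M \<Longrightarrow> sat M i \<phi>1 = sat (rv M) (len M - 1 - i) (swap \<phi>1)"
    using Release.IH(1)[OF w] .
  have IH2: "\<And>i. i < len M \<Longrightarrow> sat M i \<phi>2 = sat (rv M) (len M - 1 - i) (swap \<phi>2)"
    using Release.IH(2)[OF w] .
  show ?case
  proof
    assume H: "sat M k (Release I \<phi>1 \<phi>2)"
    show "sat (rv M) (len M - 1 - k) (swap (Release I \<phi>1 \<phi>2))"
      unfolding swap.simps sat.simps rv_simps(1)
    proof (intro allI impI)
      fix j' assume a0: "j' \<le> len M - 1 - k" and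
        a1: "in_intv (tau (rv M) (len M - 1 - k) - tau (rv M) j') I"
      note a = a0 a1
      define j where "j = len M - 1 - j'"
      have jj: "len M - 1 - j = j'" "k \<le> j" "j < len M" using a kl j_def by auto
      have "in_intv (tau M j - tau M k) I" using rv_tdiff2[OF w jj(2) jj(3)] jj(1) a by simp
      then have "sat M j \<phi>2 \<or> (\<exists>i. k \<le> i \<and> i < j \<and> sat M i \<phi>1)" using H jj by auto
      then show "sat (rv M) j' (swap \<phi>2) \<or> (\<exists>i. j' < i \<and> i \<le> len M - 1 - k \<and> sat (rv M) i (swap \<phi>1))"
      proof
        assume "sat M j \<phi>2" then show ?thesis using IH2[of j] jj by auto
      next
        assume "\<exists>i. k \<le> i \<and> i < j \<and> sat M i \<phi>1"
        then obtain i where i: "k \<le> i" "i < j" "sat M i \<phi>1" by auto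
        have "j' < len M - 1 - i" "len M - 1 - i \<le> len M - 1 - k" "i < len M" using i jj kl by auto
        then show ?thesis using IH1[of i] i by auto
      qed
    qed
  next
    assume H: "sat (rv M) (len M - 1 - k) (swap (Release I \<phi>1 \<phi>2))"
    show "sat M k (Release I \<phi>1 \<phi>2)" unfolding sat.simps
    proof (intro allI impI)
      fix j assume a: "k \<le> j \<and> j < len M \<and> in_intv (tau M j - tau M k) I"
      have "in_intv (tau (rv M) (len M - 1 - k) - tau (rv M) (len M - 1 - j)) I"
        using rv_tdiff2[OF w, of k j] a by simp
      moreover have "len M - 1 - j \<le> len M - 1 - k" using a by auto
      ultimately have "sat (rv M) (len M - 1 - j) (swap \<phi>2) \<or>
        (\<exists>i. len M - 1 - j < i \<and> i \<le> len M - 1 - k \<and> sat (rv M) i (swap \<phi>1))"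
        using H by auto
      then show "sat M j \<phi>2 \<or> (\<exists>i. k \<le> i \<and> i < j \<and> sat M i \<phi>1)"
      proof
        assume "sat (rv M) (len M - 1 - j) (swap \<phi>2)" then show ?thesis using IH2[of j] a by auto
      next
        assume "\<exists>i. len M - 1 - j < i \<and> i \<le> len M - 1 - k \<and> sat (rv M) i (swap \<phi>1)"
        then obtain i' where i: "len M - 1 - j < i'" "i' \<le> len M - 1 - k" "sat (rv M) i' (swap \<phi>1)" by auto
        have "k \<le> len M - 1 - i'" "len M - 1 - i' < j" "len M - 1 - (len M - 1 - i') = i'" using i a kl by auto
        then show ?thesis using IH1[of "len M - 1 - i'"] i a by auto
      qed
    qed
  qed
qed simp_all

theorem lemma1:
  shows "\<exists>\<rho> :: 'a tht \<Rightarrow> 'a tht. \<forall>M. wf_tht M \<longrightarrow>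
           wf_tht (\<rho> M) \<and> len (\<rho> M) = len M \<and>
           (\<forall>\<phi> k. k < len M \<longrightarrow>
              (sat M k \<phi> \<longleftrightarrow> sat (\<rho> M) (len M - 1 - k) (swap \<phi>)))"
  by (rule exI[of _ rv]) (auto simp: wf_rv main)

end
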